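(* Let $q$ be a prime power, $0<k<n$, and let $S$ be the set of subspaces $Y\in\mathcal{G}_q(n,k)$ whose Ferrers diagram is the full $k\times(n-k)$ diagram with $k(n-k)$ dots. Let $X\in\mathcal{G}_q(n,k)\setminus S$ with $\mathrm{RE}(X)=(X_n,\dots,X_1)$ and identifying vector $v(X)=(v_n,\dots,v_1)$, and let $\ell$ ($0\le\ell\le n-k-1$) be such that $v_1=\dots=v_\ell=0$ and $v_{\ell+1}=1$. Then the number $\Delta_X$ of subspaces $Y\in S$ with $X<Y$ in the extended-representation order equals \[\Delta_X=\sum_{i=1}^{\ell}\bigl(q^k-1-\{X_i\}\bigr)q^{k(n-k-i)}.\]
   Context: $\mathcal{G}_q(n,k)$ is the set of $k$-dimensional subspaces of $\mathbb{F}_q^n$; field elements are identified with $\mathbb{Z}_q=\{0,\dots,q-1\}$ (with $0\mapsto0,1\mapsto1$). $\mathrm{RE}(X)$ is the unique $k\times n$ reduced row echelon matrix whose rows span $X$, with columns labelled $X_n,\dots,X_1$ from left to right. $v(X)=(v_n,\dots,v_1)$ is binary with $v_i=1$ iff column $X_i$ contains a row's leading one. The Ferrers diagram of $X$ is obtained from $\mathrm{RE}(X)$ by deleting in each row the leading one and everything to its left, deleting columns containing leading ones, right-justifying and replacing entries by dots; it has $k(n-k)$ dots iff $v(X)$ consists of $k$ ones followed by $n-k$ zeros (i.e. $v_n=\dots=v_{n-k+1}=1$). $\mathrm{EXT}(X)$ is the $(k+1)\times n$ matrix with top row $v(X)$ above $\mathrm{RE}(X)$, its $i$-th column being $\binom{v_i}{X_i}$.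 For a $q$-ary column vector $y=(y_1,\dots,y_r)^T$, $\{y\}=\sum_t y_tq^{r-t}$. Order: $X<Y$ if, at the least index $i$ where the $i$-th columns of $\mathrm{EXT}(X)$ and $\mathrm{EXT}(Y)$ differ, $\{\binom{v(X)_i}{X_i}\}<\{\binom{v(Y)_i}{Y_i}\}$. *)

theory Defs
  imports Main "HOL-Library.Cardinality"
begin

text \<open>Vectors of F_q^n are functions nat => 'a indexed by the column labels 1..n
 (label n is the leftmost column, label 1 the rightmost); they vanish outside 1..n.
 A k x n matrix is a function M :: nat => nat => 'a, M r i = entry in row r (1..k),
 column with label i (1..n).\<close>

definition in_vecs :: "nat \<Rightarrow> (nat \<Rightarrow> 'a::field) \<Rightarrow> bool" where
  "in_vecs n w \<longleftrightarrow> (\<forall>i. (i = 0 \<or> n < i) \<longrightarrow> w i = 0)"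

definition rowspan :: "nat \<Rightarrow> (nat \<Rightarrow> nat \<Rightarrow> 'a::field) \<Rightarrow> (nat \<Rightarrow> 'a) set" where
  "rowspan k R = {w. \<exists>c. w = (\<lambda>i. \<Sum>r=1..k. c r * R r i)}"

definition lin_indep :: "nat \<Rightarrow> (nat \<Rightarrow> nat \<Rightarrow> 'a::field) \<Rightarrow> bool" where
  "lin_indep k R \<longleftrightarrow>
     (\<forall>c. (\<lambda>i. \<Sum>r=1..k. c r * R r i) = (\<lambda>_. 0) \<longrightarrow> (\<forall>r\<in>{1..k}. c r = 0))"

definition grass :: "nat \<Rightarrow> nat \<Rightarrow> (nat \<Rightarrow> 'a::field) set set" where
  "grass n k = {rowspan k R | R. (\<forall>r\<in>{1..k}. in_vecs n (R r)) \<and> lin_indep k R}"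

text \<open>Label of the leftmost nonzero entry of row r (= largest label).\<close>
definition lead :: "(nat \<Rightarrow> nat \<Rightarrow> 'a::field) \<Rightarrow> nat \<Rightarrow> nat" where
  "lead M r = Max {i. M r i \<noteq> 0}"

definition is_rref :: "nat \<Rightarrow> nat \<Rightarrow> (nat \<Rightarrow> nat \<Rightarrow> 'a::field) \<Rightarrow> bool" where
  "is_rref n k M \<longleftrightarrow>
     (\<forall>r. r \<notin> {1..k} \<longrightarrow> M r = (\<lambda>_. 0)) \<and>
     (\<forall>r\<in>{1..k}. in_vecs n (M r) \<and> M r \<noteq> (\<lambda>_. 0) \<and> M r (lead M r) = 1 \<and>
        (\<forall>r'\<in>{1..k}. r' \<noteq> r \<longrightarrow> M r' (lead M r) = 0)) \<and>
     (\<forall>r\<in>{1..k}. \<forall>r'\<in>{1..k}. r < r' \<longrightarrow> lead M r' < lead M r)"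

definition RE :: "nat \<Rightarrow> nat \<Rightarrow> (nat \<Rightarrow> 'a::field) set \<Rightarrow> nat \<Rightarrow> nat \<Rightarrow> 'a" where
  "RE n k X = (THE M. is_rref n k M \<and> rowspan k M = X)"

definition vX :: "nat \<Rightarrow> nat \<Rightarrow> (nat \<Rightarrow> 'a::field) set \<Rightarrow> nat \<Rightarrow> nat" where
  "vX n k X i = (if \<exists>r\<in>{1..k}. lead (RE n k X) r = i then 1 else 0)"

definition ferrers_dots :: "nat \<Rightarrow> nat \<Rightarrow> (nat \<Rightarrow> 'a::field) set \<Rightarrow> nat" where
  "ferrers_dots n k X =
     (\<Sum>r=1..k. card {i\<in>{1..n}. i < lead (RE n k X) r \<and> vX n k X i = 0})"

definition full_set :: "nat \<Rightarrow> nat \<Rightarrow> (nat \<Rightarrow> 'a::field) set set" where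
  "full_set n k = {Y \<in> grass n k. ferrers_dots n k Y = k * (n - k)}"

text \<open>{X_i}: value of the i-th column of RE(X), entries read via phi : F_q -> Z_q.\<close>
definition colval :: "('a::{finite,field} \<Rightarrow> nat) \<Rightarrow> nat \<Rightarrow> nat \<Rightarrow> (nat \<Rightarrow> 'a) set \<Rightarrow> nat \<Rightarrow> nat" where
  "colval phi n k X i = (\<Sum>t=1..k. phi (RE n k X t i) * CARD('a) ^ (k - t))"

text \<open>Value of the i-th column of EXT(X) (top entry v_i).\<close>
definition extval :: "('a::{finite,field} \<Rightarrow> nat) \<Rightarrow> nat \<Rightarrow> nat \<Rightarrow> (nat \<Rightarrow> 'a) set \<Rightarrow> nat \<Rightarrow> nat" where
  "extval phi n k X i = vX n k X i * CARD('a) ^ k + colval phi n k X i"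

definition ext_col_differ :: "nat \<Rightarrow> nat \<Rightarrow> (nat \<Rightarrow> 'a::field) set \<Rightarrow> (nat \<Rightarrow> 'a) set \<Rightarrow> nat \<Rightarrow> bool" where
  "ext_col_differ n k X Y i \<longleftrightarrow>
     vX n k X i \<noteq> vX n k Y i \<or> (\<exists>t\<in>{1..k}. RE n k X t i \<noteq> RE n k Y t i)"

definition ext_less :: "('a::{finite,field} \<Rightarrow> nat) \<Rightarrow> nat \<Rightarrow> nat \<Rightarrow> (nat \<Rightarrow> 'a) set \<Rightarrow> (nat \<Rightarrow> 'a) set \<Rightarrow> bool" where
  "ext_less phi n k X Y \<longleftrightarrow>
     (\<exists>i\<in>{1..n}. ext_col_differ n k X Y i \<and>
        (\<forall>j\<in>{1..n}. j < i \<longrightarrow> \<not> ext_col_differ n k X Y j) \<and>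
        extval phi n k X i < extval phi n k Y i)"

end

theory Submission
  imports Defs "HOL-Library.FuncSet"
begin

definition vlead :: "(nat \<Rightarrow> 'a::zero) \<Rightarrow> nat" where
  "vlead w = Max {i. w i \<noteq> 0}"

lemma lead_vlead: "lead M r = vlead (M r)"
  by (simp add: lead_def vlead_def)

lemma vlead_eqI:
  assumes "w p \<noteq> 0" "\<forall>i>p. w i = 0"
  shows "vlead w = p"
proof -
  have sub: "{i. w i \<noteq> 0} \<subseteq> {..p}" using assms(2) by (auto simp: not_le[symmetric])
  hence fin: "finite {i. w i \<noteq> 0}" by (rule finite_subset) simp
  show ?thesis unfolding vlead_def
    by (rule Max_eqI[OF fin]) (use sub assms(1) in auto)
qed

lemma in_vecs_sub: "in_vecs n w \<Longrightarrow> {i. w i \<noteq> 0} \<subseteq> {1..n}"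
proof
  fix x assume "in_vecs n w" "x \<in> {i. w i \<noteq> 0}"
  hence "\<not> (x = 0 \<or> n < x)" unfolding in_vecs_def mem_Collect_eq by metis
  thus "x \<in> {1..n}" by auto
qed

lemma in_vecs_fin: "in_vecs n w \<Longrightarrow> finite {i. w i \<noteq> 0}"
  using in_vecs_sub finite_subset by blast

lemma rowspanI: "v = (\<lambda>i. \<Sum>r=1..k. c r * R r i) \<Longrightarrow> v \<in> rowspan k R"
  unfolding rowspan_def by blast

lemma vlead_nz:
  assumes "in_vecs n w" "w \<noteq> (\<lambda>_. 0)"
  shows "w (vlead w) \<noteq> 0" "\<forall>i>vlead w. w i = 0" "vlead w \<in> {1..n}"
proof -
  have fin: "finite {i. w i \<noteq> 0}" using in_vecs_fin[OF assms(1)] .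
  have ne: "{i. w i \<noteq> 0} \<noteq> {}" using assms(2) by auto
  have m: "vlead w \<in> {i. w i \<noteq> 0}" unfolding vlead_def using Max_in[OF fin ne] .
  thus "w (vlead w) \<noteq> 0" by simp
  show "\<forall>i>vlead w. w i = 0"
  proof (intro allI impI)
    fix i assume "vlead w < i"
    show "w i = 0"
    proof (rule ccontr)
      assume "w i \<noteq> 0"
      hence "i \<le> vlead w" unfolding vlead_def using Max_ge[OF fin] by auto
      with \<open>vlead w < i\<close> show False by simp
    qed
  qed
  have "\<forall>i. (i = 0 \<or> n < i) \<longrightarrow> w i = 0" using assms(1) unfolding in_vecs_def .
  hence "\<not> (vlead w = 0 \<or> n < vlead w)" using \<open>w (vlead w) \<noteq> 0\<close> by blast
  thus "vlead w \<in> {1..n}" by auto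
qed

lemma rs_diff:
  assumes "v \<in> rowspan k R" "w \<in> rowspan k R"
  shows "(\<lambda>i. v i - w i) \<in> rowspan k R"
proof -
  obtain c d where c: "v = (\<lambda>i. \<Sum>r=1..k. c r * R r i)" and d: "w = (\<lambda>i. \<Sum>r=1..k. d r * R r i)"
    using assms unfolding rowspan_def by auto
  have "(\<lambda>i. v i - w i) = (\<lambda>i. \<Sum>r=1..k. (c r - d r) * R r i)"
    by (simp add: c d algebra_simps sum_subtractf)
  thus ?thesis by (rule rowspanI)
qed

lemma rs_row:
  assumes "r \<in> {1..k}" shows "R r \<in> rowspan k R"
proof -
  have "R r = (\<lambda>i. \<Sum>r'=1..k. (if r' = r then 1 else 0) * R r' i)"
  proof
    fix i
    have "(\<Sum>r'=1..k. (if r' = r then 1 else 0) * R r' i) = (\<Sum>r'=1..k. (if r' = r then R r i else 0))"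
      by (rule sum.cong) auto
    also have "\<dots> = R r i" using assms by simp
    finally show "R r i = (\<Sum>r'=1..k. (if r' = r then 1 else 0) * R r' i)" by simp
  qed
  thus ?thesis by (rule rowspanI)
qed

lemma rs_comb:
  assumes "\<forall>x\<in>S. w x \<in> rowspan k R"
  shows "(\<lambda>i. \<Sum>x\<in>S. a x * w x i) \<in> rowspan k R"
proof -
  have "\<forall>x\<in>S. \<exists>c. w x = (\<lambda>i. \<Sum>r=1..k. c r * R r i)" using assms unfolding rowspan_def by auto
  then obtain C where C: "\<forall>x\<in>S. w x = (\<lambda>i. \<Sum>r=1..k. C x r * R r i)" by metis
  have "(\<lambda>i. \<Sum>x\<in>S. a x * w x i) = (\<lambda>i. \<Sum>r=1..k. (\<Sum>x\<in>S. a x * C x r) * R r i)"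
  proof
    fix i
    have "(\<Sum>x\<in>S. a x * w x i) = (\<Sum>x\<in>S. \<Sum>r=1..k. a x * C x r * R r i)"
      by (rule sum.cong) (auto simp: C sum_distrib_left mult.assoc)
    also have "\<dots> = (\<Sum>r=1..k. \<Sum>x\<in>S. a x * C x r * R r i)" by (rule sum.swap)
    also have "\<dots> = (\<Sum>r=1..k. (\<Sum>x\<in>S. a x * C x r) * R r i)"
      by (simp add: sum_distrib_right)
    finally show "(\<Sum>x\<in>S. a x * w x i) = (\<Sum>r=1..k. (\<Sum>x\<in>S. a x * C x r) * R r i)" .
  qed
  thus ?thesis by (rule rowspanI)
qed

lemma rs_vecs:
  assumes "\<forall>r\<in>{1..k}. in_vecs n (R r)" "v \<in> rowspan k R"
  shows "in_vecs n v"
  using assms unfolding rowspan_def in_vecs_def by auto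

lemma rs_image:
  "rowspan k R = (\<lambda>c. (\<lambda>i. \<Sum>r=1..k. c r * R r i)) ` (PiE {1..k} (\<lambda>_. UNIV))"
proof
  show "rowspan k R \<subseteq> (\<lambda>c. (\<lambda>i. \<Sum>r=1..k. c r * R r i)) ` (PiE {1..k} (\<lambda>_. UNIV))"
  proof
    fix v assume "v \<in> rowspan k R"
    then obtain c where c: "v = (\<lambda>i. \<Sum>r=1..k. c r * R r i)" unfolding rowspan_def by auto
    have "v = (\<lambda>i. \<Sum>r=1..k. restrict c {1..k} r * R r i)" unfolding c
      by (auto intro!: sum.cong)
    moreover have "restrict c {1..k} \<in> PiE {1..k} (\<lambda>_. UNIV)" by simp
    ultimately show "v \<in> (\<lambda>c. (\<lambda>i. \<Sum>r=1..k. c r * R r i)) ` (PiE {1..k} (\<lambda>_. UNIV))" by blast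
  qed
qed (auto simp: rowspan_def)

lemma rs_finite: "finite (rowspan k (R :: nat \<Rightarrow> nat \<Rightarrow> 'a::{finite,field}))"
  by (subst rs_image) (auto intro!: finite_PiE)


lemma rref_row:
  assumes "is_rref n k M" "r \<in> {1..k}"
  shows "in_vecs n (M r)" "M r \<noteq> (\<lambda>_. 0)" "M r (lead M r) = 1"
    "\<forall>r'\<in>{1..k}. r' \<noteq> r \<longrightarrow> M r' (lead M r) = 0"
  using assms unfolding is_rref_def by auto

lemma rref_above:
  assumes "is_rref n k M" "r \<in> {1..k}" "lead M r < i"
  shows "M r i = 0"
  using vlead_nz(2)[OF rref_row(1,2)[OF assms(1,2)]] assms(3) by (simp add: lead_vlead)

lemma rref_lead_range:
  assumes "is_rref n k M" "r \<in> {1..k}"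
  shows "lead M r \<in> {1..n}"
  using vlead_nz(3)[OF rref_row(1,2)[OF assms(1,2)]] by (simp add: lead_vlead)

lemma rref_dec:
  assumes "is_rref n k M" "r \<in> {1..k}" "r' \<in> {1..k}" "r < r'"
  shows "lead M r' < lead M r"
  using assms unfolding is_rref_def by blast

lemma rref_outside: "is_rref n k M \<Longrightarrow> r \<notin> {1..k} \<Longrightarrow> M r = (\<lambda>_. 0)"
  unfolding is_rref_def by blast

lemma rref_eval:
  assumes "is_rref n k M" "r0 \<in> {1..k}"
  shows "(\<Sum>r=1..k. c r * M r (lead M r0)) = c r0"
proof -
  have "(\<Sum>r=1..k. c r * M r (lead M r0)) = (\<Sum>r=1..k. if r = r0 then c r0 else 0)"
    by (rule sum.cong) (use rref_row[OF assms] in auto)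
  also have "\<dots> = c r0" using assms(2) by simp
  finally show ?thesis .
qed

lemma rref_K:
  assumes M: "is_rref n k M" and v: "v \<in> rowspan k M" and nz: "v \<noteq> (\<lambda>_. 0)"
  shows "\<exists>r\<in>{1..k}. vlead v = lead M r \<and> v (lead M r) \<noteq> 0"
proof -
  obtain c where c: "v = (\<lambda>i. \<Sum>r=1..k. c r * M r i)" using v unfolding rowspan_def by auto
  define S where "S = {r\<in>{1..k}. c r \<noteq> 0}"
  have "S \<noteq> {}"
  proof
    assume "S = {}"
    hence "\<forall>r\<in>{1..k}. c r = 0" unfolding S_def by auto
    hence "v = (\<lambda>_. 0)" unfolding c by simp
    with nz show False ..
  qed
  have finS: "finite S" unfolding S_def by simp
  define r0 where "r0 = Min S"
  have r0S: "r0 \<in> S" unfolding r0_def using Min_in[OF finS \<open>S \<noteq> {}\<close>] .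
  hence r0: "r0 \<in> {1..k}" "c r0 \<noteq> 0" unfolding S_def by auto
  have val: "v (lead M r0) = c r0" unfolding c using rref_eval[OF M r0(1)] by simp
  have above: "\<forall>i>lead M r0. v i = 0"
  proof (intro allI impI)
    fix i assume i: "lead M r0 < i"
    have "(\<Sum>r=1..k. c r * M r i) = (\<Sum>r=1..k. 0)"
    proof (rule sum.cong)
      fix r assume r: "r \<in> {1..k}"
      show "c r * M r i = 0"
      proof (cases "c r = 0")
        case False
        hence "r \<in> S" using r unfolding S_def by auto
        hence "r0 \<le> r" unfolding r0_def using Min_le[OF finS] by auto
        hence "lead M r \<le> lead M r0"
          using rref_dec[OF M r0(1) r] by (cases "r = r0") auto
        hence "M r i = 0" using rref_above[OF M r] i by simp
        thus ?thesis by simp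
      qed simp
    qed simp
    thus "v i = 0" unfolding c by simp
  qed
  have "vlead v = lead M r0" by (rule vlead_eqI) (use val r0 above in auto)
  thus ?thesis using r0 val by auto
qed

lemma rref_zero:
  assumes M: "is_rref n k M" and v: "v \<in> rowspan k M" and z: "\<forall>r\<in>{1..k}. v (lead M r) = 0"
  shows "v = (\<lambda>_. 0)"
  using rref_K[OF M v] z by blast

lemma rref_lin_indep:
  assumes M: "is_rref n k M" shows "lin_indep k M"
  unfolding lin_indep_def
proof (intro allI impI ballI)
  fix c r assume h: "(\<lambda>i. \<Sum>r=1..k. c r * M r i) = (\<lambda>_. 0)" and r: "r \<in> {1..k}"
  have "(\<Sum>r'=1..k. c r' * M r' (lead M r)) = 0" using fun_cong[OF h, of "lead M r"] by simp
  thus "c r = 0" using rref_eval[OF M r] by simp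
qed

lemma rref_grass: "is_rref n k M \<Longrightarrow> rowspan k M \<in> grass n k"
  unfolding grass_def using rref_lin_indep[of n k M] rref_row(1)[of n k M] by blast

lemma dec_inj:
  fixes k :: nat
  assumes "\<forall>r\<in>{1..k}. \<forall>r'\<in>{1..k}. r < r' \<longrightarrow> (f r' :: nat) < f r"
  shows "inj_on f {1..k}"
proof (rule inj_onI)
  fix x y assume "x \<in> {1..k}" "y \<in> {1..k}" "f x = f y"
  show "x = y"
  proof (rule ccontr)
    assume "x \<noteq> y"
    hence "x < y \<or> y < x" by auto
    thus False using assms \<open>x \<in> {1..k}\<close> \<open>y \<in> {1..k}\<close> \<open>f x = f y\<close> by force
  qed
qed

lemma dec_above:
  fixes k r :: nat
  assumes d: "\<forall>r\<in>{1..k}. \<forall>r'\<in>{1..k}. r < r' \<longrightarrow> (f r' :: nat) < f r" and r: "r \<in> {1..k}"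
  shows "card {y \<in> f ` {1..k}. f r < y} = r - 1"
proof -
  have "{y \<in> f ` {1..k}. f r < y} = f ` {1..<r}"
  proof
    show "{y \<in> f ` {1..k}. f r < y} \<subseteq> f ` {1..<r}"
    proof
      fix y assume "y \<in> {y \<in> f ` {1..k}. f r < y}"
      then obtain r' where r': "r' \<in> {1..k}" "y = f r'" "f r < f r'" by auto
      have "r' < r"
      proof (rule ccontr)
        assume "\<not> r' < r"
        hence "r = r' \<or> r < r'" by auto
        thus False using d r r' by (metis less_asym less_irrefl)
      qed
      thus "y \<in> f ` {1..<r}" using r' by auto
    qed
  next
    show "f ` {1..<r} \<subseteq> {y \<in> f ` {1..k}. f r < y}"
      using d r by auto
  qed
  moreover have "inj_on f {1..<r}"
    by (rule inj_on_subset[OF dec_inj[OF d]]) (use r in auto)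
  ultimately show ?thesis by (simp add: card_image)
qed

lemma enum_unique:
  fixes k r :: nat
  assumes df: "\<forall>r\<in>{1..k}. \<forall>r'\<in>{1..k}. r < r' \<longrightarrow> (f r' :: nat) < f r"
    and dg: "\<forall>r\<in>{1..k}. \<forall>r'\<in>{1..k}. r < r' \<longrightarrow> (g r' :: nat) < g r"
    and eq: "f ` {1..k} = g ` {1..k}" and r: "r \<in> {1..k}"
  shows "f r = g r"
proof -
  let ?F = "f ` {1..k}"
  have cf: "card {y \<in> ?F. f r < y} = r - 1" using dec_above[OF df r] .
  have cg: "card {y \<in> ?F. g r < y} = r - 1" using dec_above[OF dg r] eq by simp
  have fF: "f r \<in> ?F" "g r \<in> ?F" using r eq by auto
  have fin: "finite ?F" by simp
  show ?thesis
  proof (rule ccontr)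
    assume "f r \<noteq> g r"
    hence "f r < g r \<or> g r < f r" by auto
    thus False
    proof
      assume lt: "f r < g r"
      have "{y \<in> ?F. g r < y} \<subset> {y \<in> ?F. f r < y}" using lt fF by auto
      hence "card {y \<in> ?F. g r < y} < card {y \<in> ?F. f r < y}"
        by (rule psubset_card_mono[rotated]) simp
      thus False using cf cg by simp
    next
      assume lt: "g r < f r"
      have "{y \<in> ?F. f r < y} \<subset> {y \<in> ?F. g r < y}" using lt fF by auto
      hence "card {y \<in> ?F. f r < y} < card {y \<in> ?F. g r < y}"
        by (rule psubset_card_mono[rotated]) simp
      thus False using cf cg by simp
    qed
  qed
qed

lemma rref_dec_all: "is_rref n k M \<Longrightarrow> \<forall>r\<in>{1..k}. \<forall>r'\<in>{1..k}. r < r' \<longrightarrow> lead M r' < lead M r"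
  unfolding is_rref_def by blast

lemma rref_unique:
  assumes M: "is_rref n k M" and N: "is_rref n k N" and eq: "rowspan k M = rowspan k N"
  shows "M = N"
proof -
  have sub: "lead A ` {1..k} \<subseteq> lead B ` {1..k}"
    if A: "is_rref n k A" and B: "is_rref n k B" and e: "rowspan k A = rowspan k B" for A B
  proof
    fix x assume "x \<in> lead A ` {1..k}"
    then obtain r where r: "r \<in> {1..k}" "x = lead A r" by auto
    have "A r \<in> rowspan k B" using rs_row[OF r(1), of A] e by simp
    then obtain r' where "r' \<in> {1..k}" "vlead (A r) = lead B r'"
      using rref_K[OF B _ rref_row(2)[OF A r(1)]] by blast
    thus "x \<in> lead B ` {1..k}" using r by (auto simp: lead_vlead)
  qed
  have leq: "lead M ` {1..k} = lead N ` {1..k}"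
    using sub[OF M N eq] sub[OF N M eq[symmetric]] by blast
  have ll: "\<forall>r\<in>{1..k}. lead M r = lead N r"
    using enum_unique[OF rref_dec_all[OF M] rref_dec_all[OF N] leq] by blast
  show ?thesis
  proof
    fix r
    show "M r = N r"
    proof (cases "r \<in> {1..k}")
      case False thus ?thesis using rref_outside[OF M] rref_outside[OF N] by simp
    next
      case True
      have d: "(\<lambda>i. M r i - N r i) \<in> rowspan k N"
        using rs_diff[OF _ rs_row[OF True, of N], of "M r"] rs_row[OF True, of M] eq by simp
      have vM: "M r (lead M r') = (if r = r' then 1 else 0)" if "r' \<in> {1..k}" for r'
        using rref_row[OF M that] True by auto
      have vN: "N r (lead N r') = (if r = r' then 1 else 0)" if "r' \<in> {1..k}" for r'
        using rref_row[OF N that] True by auto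
      have "\<forall>r'\<in>{1..k}. (\<lambda>i. M r i - N r i) (lead N r') = 0"
        using vM vN ll by auto
      hence "(\<lambda>i. M r i - N r i) = (\<lambda>_. 0)" by (rule rref_zero[OF N d])
      thus ?thesis by (auto simp: fun_eq_iff dest: fun_cong)
    qed
  qed
qed

lemma RE_rowspan: "is_rref n k M \<Longrightarrow> RE n k (rowspan k M) = M"
  unfolding RE_def by (rule the_equality) (auto intro: rref_unique)


lemma card_ge2: "2 \<le> CARD('a::{finite,field})"
proof -
  have "card {0::'a, 1} \<le> CARD('a)" by (rule card_mono) auto
  thus ?thesis by simp
qed

lemma comb_indep:
  fixes W :: "nat \<Rightarrow> nat \<Rightarrow> 'a::field"
  assumes fin: "finite P" and W: "\<forall>p\<in>P. W p p \<noteq> 0 \<and> (\<forall>i>p. W p i = 0)"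
    and z: "\<forall>i. (\<Sum>p\<in>P. d p * W p i) = 0"
  shows "\<forall>p\<in>P. d p = 0"
proof (rule ccontr)
  assume "\<not> (\<forall>p\<in>P. d p = 0)"
  define S where "S = {p\<in>P. d p \<noteq> 0}"
  have ne: "S \<noteq> {}" and finS: "finite S" using \<open>\<not> _\<close> fin unfolding S_def by auto
  define m where "m = Max S"
  have mS: "m \<in> S" unfolding m_def using Max_in[OF finS ne] .
  have "(\<Sum>p\<in>P. d p * W p m) = (\<Sum>p\<in>P. if p = m then d m * W m m else 0)"
  proof (rule sum.cong)
    fix p assume p: "p \<in> P"
    show "d p * W p m = (if p = m then d m * W m m else 0)"
    proof (cases "p = m")
      case False
      show ?thesis
      proof (cases "d p = 0")
        case False
        hence "p \<in> S" using p unfolding S_def by auto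
        hence "p < m" using \<open>p \<noteq> m\<close> Max_ge[OF finS] unfolding m_def by fastforce
        hence "W p m = 0" using W p by auto
        thus ?thesis using \<open>p \<noteq> m\<close> by simp
      qed (use False in simp)
    qed simp
  qed simp
  also have "\<dots> = d m * W m m" using mS fin unfolding S_def by simp
  finally have "d m * W m m = 0" using z by simp
  moreover have "d m \<noteq> 0" "W m m \<noteq> 0" using mS W unfolding S_def by auto
  ultimately show False by simp
qed

lemma rref_exists:
  fixes R :: "nat \<Rightarrow> nat \<Rightarrow> 'a::{finite,field}"
  assumes rows: "\<forall>r\<in>{1..k}. in_vecs n (R r)" and li: "lin_indep k R"
  shows "\<exists>M. is_rref n k M \<and> rowspan k M = rowspan k R"
proof -
  define V where "V = rowspan k R"
  define q where "q = CARD('a)"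
  have q2: "2 \<le> q" unfolding q_def by (rule card_ge2)
  have Vvec: "\<forall>v\<in>V. in_vecs n v" unfolding V_def using rs_vecs[OF rows] by blast
  have Vfin: "finite V" unfolding V_def by (rule rs_finite)
  have Vdiff: "(\<lambda>i. v i - w i) \<in> V" if "v \<in> V" "w \<in> V" for v w
    using rs_diff that unfolding V_def by blast
  have Vcomb: "(\<lambda>i. \<Sum>x\<in>S. a x * w x i) \<in> V" if "\<forall>x\<in>S. w x \<in> V" for S a w
    using rs_comb that unfolding V_def by blast
  have cardV: "card V = q ^ k"
  proof -
    define Phi where "Phi = (\<lambda>c. (\<lambda>i. \<Sum>r=1..k. c r * R r i))"
    have img: "Phi ` (PiE {1..k} (\<lambda>_. UNIV)) = V" unfolding V_def Phi_def by (rule rs_image[symmetric])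
    have inj: "inj_on Phi (PiE {1..k} (\<lambda>_. UNIV))"
    proof (rule inj_onI)
      fix c d assume c: "c \<in> PiE {1..k} (\<lambda>_. UNIV)" and d: "d \<in> PiE {1..k} (\<lambda>_. UNIV)"
        and e: "Phi c = Phi d"
      have "(\<lambda>i. \<Sum>r=1..k. (c r - d r) * R r i) = (\<lambda>_. 0)"
      proof
        fix i
        have "(\<Sum>r=1..k. c r * R r i) = (\<Sum>r=1..k. d r * R r i)" using fun_cong[OF e, of i]
          unfolding Phi_def by simp
        thus "(\<Sum>r=1..k. (c r - d r) * R r i) = 0"
          by (simp add: algebra_simps sum_subtractf)
      qed
      have li': "\<And>c. (\<lambda>i. \<Sum>r=1..k. c r * R r i) = (\<lambda>_. 0) \<Longrightarrow> \<forall>r\<in>{1..k}. c r = 0"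
        using li unfolding lin_indep_def by blast
      have "\<forall>r\<in>{1..k}. c r - d r = 0" using li'[of "\<lambda>r. c r - d r"] \<open>_ = (\<lambda>_. 0)\<close> by simp
      thus "c = d" using c d by (intro PiE_ext) auto
    qed
    have "card V = card (PiE {1..k} (\<lambda>_. UNIV :: 'a set))" using card_image[OF inj] img by simp
    also have "\<dots> = q ^ k" by (simp add: card_PiE q_def)
    finally show ?thesis .
  qed
  define P where "P = {vlead w | w. w \<in> V \<and> w \<noteq> (\<lambda>_. 0)}"
  have Psub: "P \<subseteq> {1..n}"
  proof
    fix p assume "p \<in> P"
    then obtain w where w: "w \<in> V" "w \<noteq> (\<lambda>_. 0)" "p = vlead w" unfolding P_def by blast
    have "in_vecs n w" using Vvec w(1) by blast
    thus "p \<in> {1..n}" using vlead_nz(3)[OF _ w(2)] w(3) by blast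
  qed
  have Pfin: "finite P" using Psub finite_subset by blast
  have Z: "u = (\<lambda>_. 0)" if "u \<in> V" "\<forall>p\<in>P. u p = 0" for u
  proof (rule ccontr)
    assume nz: "u \<noteq> (\<lambda>_. 0)"
    hence "vlead u \<in> P" unfolding P_def using that(1) by blast
    moreover have "in_vecs n u" using Vvec that(1) by blast
    hence "u (vlead u) \<noteq> 0" using vlead_nz(1)[OF _ nz] by blast
    ultimately show False using that(2) by blast
  qed
  define piP where "piP = (\<lambda>v::nat \<Rightarrow> 'a. restrict v P)"
  have pinj: "inj_on piP V"
  proof (rule inj_onI)
    fix v w assume v: "v \<in> V" and w: "w \<in> V" and e: "piP v = piP w"
    have "\<forall>p\<in>P. v p = w p"
    proof
      fix p assume "p \<in> P"
      thus "v p = w p" using fun_cong[OF e, of p] unfolding piP_def by simp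
    qed
    hence "(\<lambda>i. v i - w i) = (\<lambda>_. 0)" using Z[OF Vdiff[OF v w]] by simp
    thus "v = w" by (auto simp: fun_eq_iff dest: fun_cong)
  qed
  have pimg: "piP ` V \<subseteq> PiE P (\<lambda>_. UNIV)" unfolding piP_def by auto
  have cardP: "card (PiE P (\<lambda>_. UNIV :: 'a set)) = q ^ card P" by (simp add: card_PiE q_def Pfin)
  have le1: "card V \<le> q ^ card P"
    using card_inj_on_le[OF pinj pimg] cardP by (simp add: Pfin finite_PiE)
  have "\<forall>p\<in>P. \<exists>w. w \<in> V \<and> w \<noteq> (\<lambda>_. 0) \<and> vlead w = p" unfolding P_def by blast
  from bchoice[OF this] obtain W where W: "\<forall>p\<in>P. W p \<in> V \<and> W p \<noteq> (\<lambda>_. 0) \<and> vlead (W p) = p" ..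
  have Wprop: "\<forall>p\<in>P. W p p \<noteq> 0 \<and> (\<forall>i>p. W p i = 0)"
  proof
    fix p assume p: "p \<in> P"
    have iv: "in_vecs n (W p)" using W Vvec p by blast
    have nz: "W p \<noteq> (\<lambda>_. 0)" using W p by blast
    show "W p p \<noteq> 0 \<and> (\<forall>i>p. W p i = 0)" using vlead_nz(1,2)[OF iv nz] W p by simp
  qed
  define Psi where "Psi = (\<lambda>c. (\<lambda>i. \<Sum>p\<in>P. c p * W p i))"
  have WV: "\<forall>p\<in>P. W p \<in> V" using W by blast
  have psimg: "Psi ` (PiE P (\<lambda>_. UNIV)) \<subseteq> V"
  proof
    fix x assume "x \<in> Psi ` (PiE P (\<lambda>_. UNIV))"
    then obtain c where "x = Psi c" by blast
    thus "x \<in> V" unfolding Psi_def using Vcomb[OF WV] by simp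
  qed
  have psinj: "inj_on Psi (PiE P (\<lambda>_. UNIV))"
  proof (rule inj_onI)
    fix c d assume c: "c \<in> PiE P (\<lambda>_. UNIV)" and d: "d \<in> PiE P (\<lambda>_. UNIV)"
      and e: "Psi c = Psi d"
    have "\<forall>i. (\<Sum>p\<in>P. (c p - d p) * W p i) = 0"
    proof
      fix i
      have "(\<Sum>p\<in>P. c p * W p i) = (\<Sum>p\<in>P. d p * W p i)" using fun_cong[OF e, of i]
        unfolding Psi_def by simp
      thus "(\<Sum>p\<in>P. (c p - d p) * W p i) = 0"
        by (simp add: algebra_simps sum_subtractf)
    qed
    hence "\<forall>p\<in>P. c p - d p = 0" by (rule comb_indep[OF Pfin Wprop])
    thus "c = d" using c d by (intro PiE_ext) auto
  qed
  have le2: "q ^ card P \<le> card V"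
    using card_inj_on_le[OF psinj psimg Vfin] cardP by simp
  have cardPk: "card P = k"
  proof -
    have e: "q ^ card P = q ^ k" using le1 le2 cardV by linarith
    have "1 < q" using q2 by simp
    hence "(q ^ card P = q ^ k) = (card P = k)" by (rule power_inject_exp)
    thus ?thesis using e by blast
  qed
  have pisurj: "piP ` V = PiE P (\<lambda>_. UNIV)"
  proof (rule card_subset_eq)
    show "finite (PiE P (\<lambda>_. UNIV :: 'a set))" by (simp add: Pfin finite_PiE)
    show "piP ` V \<subseteq> PiE P (\<lambda>_. UNIV)" by (rule pimg)
    show "card (piP ` V) = card (PiE P (\<lambda>_. UNIV :: 'a set))"
      using card_image[OF pinj] le1 le2 cardP by linarith
  qed
  have "\<forall>p\<in>P. \<exists>u. u \<in> V \<and> u p = 1 \<and> (\<forall>p'\<in>P. p' \<noteq> p \<longrightarrow> u p' = 0)"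
  proof
    fix p assume p: "p \<in> P"
    have "restrict (\<lambda>x. if x = p then 1 else 0) P \<in> PiE P (\<lambda>_. UNIV :: 'a set)" by simp
    hence "restrict (\<lambda>x. if x = p then (1::'a) else 0) P \<in> piP ` V" by (subst pisurj)
    then obtain u where u': "restrict (\<lambda>x. if x = p then (1::'a) else 0) P = piP u" "u \<in> V"
      by (rule imageE)
    note u = u'(2) u'(1)[symmetric]
    have "\<forall>x\<in>P. u x = (if x = p then 1 else 0)"
    proof
      fix x assume "x \<in> P"
      thus "u x = (if x = p then 1 else 0)" using fun_cong[OF u(2), of x] unfolding piP_def by simp
    qed
    hence "u p = 1" "\<forall>p'\<in>P. p' \<noteq> p \<longrightarrow> u p' = 0" using p by simp_all
    thus "\<exists>u. u \<in> V \<and> u p = 1 \<and> (\<forall>p'\<in>P. p' \<noteq> p \<longrightarrow> u p' = 0)" using u(1) by blast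
  qed
  from bchoice[OF this] obtain U where U: "\<forall>p\<in>P. U p \<in> V \<and> U p p = 1 \<and> (\<forall>p'\<in>P. p' \<noteq> p \<longrightarrow> U p p' = 0)"
    ..
  have Ulead: "vlead (U p) = p" if p: "p \<in> P" for p
  proof -
    have "U p p = 1" using U p by blast
    have nz: "U p \<noteq> (\<lambda>_. 0)"
    proof
      assume "U p = (\<lambda>_. 0)"
      hence "U p p = 0" by simp
      with \<open>U p p = 1\<close> show False by simp
    qed
    have "vlead (U p) \<in> P" unfolding P_def using nz U p by blast
    moreover have "in_vecs n (U p)" using Vvec U p by blast
    hence "U p (vlead (U p)) \<noteq> 0" using vlead_nz(1)[OF _ nz] by blast
    moreover have "\<forall>p'\<in>P. p' \<noteq> p \<longrightarrow> U p p' = 0" using U p by blast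
    ultimately show ?thesis by blast
  qed
  define xs where "xs = sorted_list_of_set P"
  have lxs: "length xs = k" unfolding xs_def using cardPk by simp
  have sxs: "sorted_wrt (<) xs" unfolding xs_def by simp
  have setxs: "set xs = P" unfolding xs_def using Pfin by simp
  define f where "f = (\<lambda>r. xs ! (k - r))"
  have fP: "f r \<in> P" if "r \<in> {1..k}" for r
    unfolding f_def using that lxs setxs nth_mem[of "k - r" xs] by auto
  have fdec: "\<forall>r\<in>{1..k}. \<forall>r'\<in>{1..k}. r < r' \<longrightarrow> f r' < f r"
  proof (intro ballI impI)
    fix r r' :: nat assume r: "r \<in> {1..k}" and r': "r' \<in> {1..k}" and lt: "r < r'"
    show "f r' < f r" unfolding f_def
      using sorted_wrt_nth_less[OF sxs, of "k - r'" "k - r"] r r' lt lxs by auto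
  qed
  have fimg: "f ` {1..k} = P"
  proof (rule card_subset_eq[OF Pfin])
    show "f ` {1..k} \<subseteq> P" using fP by blast
    show "card (f ` {1..k}) = card P" using card_image[OF dec_inj[OF fdec]] cardPk by simp
  qed
  define M where "M = (\<lambda>r. if r \<in> {1..k} then U (f r) else (\<lambda>_. 0))"
  have Mlead: "lead M r = f r" if "r \<in> {1..k}" for r
    using Ulead[OF fP[OF that]] that unfolding M_def lead_vlead by simp
  have MV: "M r \<in> V" if "r \<in> {1..k}" for r using U fP[OF that] that unfolding M_def by simp
  have Mrref: "is_rref n k M"
    unfolding is_rref_def
  proof (intro conjI ballI allI impI)
    show "M r = (\<lambda>_. 0)" if "r \<notin> {1..k}" for r using that unfolding M_def by auto
  next
    fix r assume r: "r \<in> {1..k}"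
    show "in_vecs n (M r)" using MV[OF r] Vvec by blast
    show "M r (lead M r) = 1" using Mlead[OF r] U fP[OF r] r unfolding M_def by simp
    thus "M r \<noteq> (\<lambda>_. 0)"
    proof -
      assume h: "M r (lead M r) = 1"
      show ?thesis
      proof
        assume "M r = (\<lambda>_. 0)"
        with h show False by simp
      qed
    qed
    fix r' assume r': "r' \<in> {1..k}" and ne: "r' \<noteq> r"
    have "f r' \<noteq> f r" using inj_onD[OF dec_inj[OF fdec] _ r' r] ne by blast
    thus "M r' (lead M r) = 0" using Mlead[OF r] U fP r r' unfolding M_def by simp
  next
    fix r r' assume r: "r \<in> {1..k}" and r': "r' \<in> {1..k}" and lt: "r < r'"
    show "lead M r' < lead M r" using Mlead r r' fdec lt by simp
  qed
  have "rowspan k M = V"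
  proof
    show "rowspan k M \<subseteq> V"
    proof
      fix v assume "v \<in> rowspan k M"
      then obtain c where c: "v = (\<lambda>i. \<Sum>r=1..k. c r * M r i)" unfolding rowspan_def by auto
      have "\<forall>r\<in>{1..k}. M r \<in> V" using MV by blast
      thus "v \<in> V" unfolding c by (rule Vcomb)
    qed
  next
    show "V \<subseteq> rowspan k M"
    proof
      fix v assume v: "v \<in> V"
      define w where "w = (\<lambda>i. \<Sum>r=1..k. v (f r) * M r i)"
      have "\<forall>r\<in>{1..k}. M r \<in> V" using MV by blast
      hence wV: "w \<in> V" unfolding w_def by (rule Vcomb)
      have "\<forall>p\<in>P. (\<lambda>i. w i - v i) p = 0"
      proof
        fix p assume "p \<in> P"
        then obtain r0 where r0: "r0 \<in> {1..k}" "p = f r0" using fimg by blast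
        have "w p = v (f r0)" unfolding w_def r0(2) using rref_eval[OF Mrref r0(1), of "\<lambda>r. v (f r)"]
          Mlead[OF r0(1)] by simp
        thus "(\<lambda>i. w i - v i) p = 0" using r0 by simp
      qed
      hence "(\<lambda>i. w i - v i) = (\<lambda>_. 0)" using Z[OF Vdiff[OF wV v]] by blast
      hence "v = w" by (auto simp: fun_eq_iff dest: fun_cong)
      thus "v \<in> rowspan k M" unfolding w_def by (rule rowspanI)
    qed
  qed
  thus ?thesis using Mrref unfolding V_def by blast
qed

lemma RE_grass:
  fixes Y :: "(nat \<Rightarrow> 'a::{finite,field}) set"
  assumes "Y \<in> grass n k"
  shows "is_rref n k (RE n k Y) \<and> rowspan k (RE n k Y) = Y"
proof -
  obtain R where R: "Y = rowspan k R" "\<forall>r\<in>{1..k}. in_vecs n (R r)" "lin_indep k R"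
    using assms unfolding grass_def by blast
  obtain M where M: "is_rref n k M" "rowspan k M = Y" using rref_exists[OF R(2,3)] R(1) by blast
  have "RE n k Y = M" using RE_rowspan[OF M(1)] M(2) by simp
  thus ?thesis using M by simp
qed


lemma vX_alt: "vX n k Y i = (if i \<in> lead (RE n k Y) ` {1..k} then 1 else 0)"
proof -
  have "(\<exists>r\<in>{1..k}. lead (RE n k Y) r = i) = (i \<in> lead (RE n k Y) ` {1..k})" by blast
  thus ?thesis unfolding vX_def by simp
qed

lemma ferrers_alt:
  "ferrers_dots n k Y =
     (\<Sum>r=1..k. card {i\<in>{1..n}. i < lead (RE n k Y) r \<and> i \<notin> lead (RE n k Y) ` {1..k}})"
  unfolding ferrers_dots_def vX_alt by (intro sum.cong refl arg_cong[where f=card]) auto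

lemma ferrers_iff:
  assumes M: "is_rref n k M" and kn: "k \<le> n"
  shows "(\<Sum>r=1..k. card {i\<in>{1..n}. i < lead M r \<and> i \<notin> lead M ` {1..k}}) = k * (n - k)
         \<longleftrightarrow> (\<forall>r\<in>{1..k}. lead M r = n + 1 - r)"
proof -
  define l where "l = lead M"
  define L where "L = l ` {1..k}"
  define T where "T = (\<lambda>r. {i\<in>{1..n}. i < l r \<and> i \<notin> L})"
  have dec: "\<forall>r\<in>{1..k}. \<forall>r'\<in>{1..k}. r < r' \<longrightarrow> l r' < l r" unfolding l_def by (rule rref_dec_all[OF M])
  have rng: "l r \<in> {1..n}" if "r \<in> {1..k}" for r unfolding l_def by (rule rref_lead_range[OF M that])
  have inj: "inj_on l {1..k}" by (rule dec_inj[OF dec])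
  have up: "r + l r \<le> n + 1" if r: "r \<in> {1..k}" for r
  proof -
    have "l ` {1..r} \<subseteq> {l r..n}"
    proof
      fix x assume "x \<in> l ` {1..r}"
      then obtain r' where r': "r' \<in> {1..r}" "x = l r'" by auto
      have "l r \<le> l r'"
      proof (cases "r' = r")
        case False
        hence "r' < r" using r' by auto
        moreover have "r' \<in> {1..k}" using r r' by auto
        ultimately have "l r < l r'" using dec r by blast
        thus ?thesis by simp
      qed simp
      moreover have "l r' \<le> n" using rng[of r'] r r' by auto
      ultimately show "x \<in> {l r..n}" using r' by auto
    qed
    moreover have "inj_on l {1..r}" by (rule inj_on_subset[OF inj]) (use r in auto)
    ultimately have "card {1..r} \<le> card {l r..n}"
      using card_mono[of "{l r..n}" "l ` {1..r}"] card_image by fastforce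
    hence "r \<le> n + 1 - l r" by simp
    moreover have "l r \<le> n" using rng[OF r] by simp
    ultimately show ?thesis by arith
  qed
  have tb: "card (T r) + (k - r) \<le> l r - 1" if r: "r \<in> {1..k}" for r
  proof -
    have s1: "T r \<subseteq> {1..<l r}" unfolding T_def by auto
    have s2: "l ` {r+1..k} \<subseteq> {1..<l r}"
    proof
      fix x assume "x \<in> l ` {r+1..k}"
      then obtain r' where r': "r' \<in> {r+1..k}" "x = l r'" by auto
      have "l r' < l r" using dec r r' by auto
      moreover have "1 \<le> l r'" using rng[of r'] r' r by auto
      ultimately show "x \<in> {1..<l r}" using r' by auto
    qed
    have dj: "T r \<inter> l ` {r+1..k} = {}" unfolding T_def L_def using r by auto
    have c2: "card (l ` {r+1..k}) = k - r"
      using card_image[OF inj_on_subset[OF inj, of "{r+1..k}"]] r by auto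
    have "card (T r \<union> l ` {r+1..k}) \<le> card {1..<l r}"
      by (rule card_mono) (use s1 s2 in auto)
    moreover have "card (T r \<union> l ` {r+1..k}) = card (T r) + card (l ` {r+1..k})"
      by (rule card_Un_disjoint) (use dj in \<open>auto simp: T_def\<close>)
    ultimately show ?thesis using c2 by simp
  qed
  have tle: "card (T r) \<le> n - k" if r: "r \<in> {1..k}" for r
  proof -
    have "card (T r) + (k - r) \<le> l r - 1" "r + l r \<le> n + 1" "1 \<le> r" "r \<le> k"
      using tb[OF r] up[OF r] r by auto
    thus ?thesis using kn by arith
  qed
  have "(\<Sum>r=1..k. card (T r)) = k * (n - k) \<longleftrightarrow> (\<forall>r\<in>{1..k}. l r = n + 1 - r)"
  proof
    assume S: "(\<Sum>r=1..k. card (T r)) = k * (n - k)"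
    have all: "\<forall>r\<in>{1..k}. card (T r) = n - k"
    proof (rule ccontr)
      assume "\<not> (\<forall>r\<in>{1..k}. card (T r) = n - k)"
      then obtain r where r: "r \<in> {1..k}" "card (T r) \<noteq> n - k" by blast
      have a1: "\<forall>x\<in>{1..k}. card (T x) \<le> n - k" using tle by blast
      have a2: "card (T r) < n - k" using tle[OF r(1)] r(2) by simp
      have "(\<Sum>r=1..k. card (T r)) < (\<Sum>r=1..k. n - k)"
        by (rule sum_strict_mono_ex1[OF finite_atLeastAtMost a1 bexI[where P="\<lambda>x. card (T x) < n - k", OF a2 r(1)]])
      thus False using S by simp
    qed
    show "\<forall>r\<in>{1..k}. l r = n + 1 - r"
    proof
      fix r assume r: "r \<in> {1..k}"
      have "card (T r) + (k - r) \<le> l r - 1" "r + l r \<le> n + 1" "1 \<le> r" "r \<le> k"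
        "card (T r) = n - k" "1 \<le> l r"
        using tb[OF r] up[OF r] r all rng[OF r] by auto
      thus "l r = n + 1 - r" using kn by arith
    qed
  next
    assume A: "\<forall>r\<in>{1..k}. l r = n + 1 - r"
    have Lc: "x \<in> L \<longleftrightarrow> (n - k < x \<and> x \<le> n)" for x
    proof
      assume "x \<in> L"
      then obtain r where r: "r \<in> {1..k}" "x = l r" unfolding L_def by auto
      have "l r = n + 1 - r" using A r(1) by blast
      thus "n - k < x \<and> x \<le> n" using r kn by auto
    next
      assume x: "n - k < x \<and> x \<le> n"
      have m: "n + 1 - x \<in> {1..k}" using x kn by auto
      have "l (n + 1 - x) = n + 1 - (n + 1 - x)" using A m by blast
      hence "x = l (n + 1 - x)" using x by simp
      thus "x \<in> L" unfolding L_def using m by blast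
    qed
    have "T r = {1..n-k}" if r: "r \<in> {1..k}" for r
    proof (rule set_eqI)
      fix x
      have lr: "l r = n + 1 - r" using A r by blast
      show "x \<in> T r \<longleftrightarrow> x \<in> {1..n-k}" using Lc[of x] lr r kn unfolding T_def by auto
    qed
    hence "(\<Sum>r=1..k. card (T r)) = (\<Sum>r=1..k. n - k)" by (intro sum.cong) auto
    thus "(\<Sum>r=1..k. card (T r)) = k * (n - k)" by simp
  qed
  thus ?thesis unfolding T_def L_def l_def .
qed

lemma full_iff:
  fixes Y :: "(nat \<Rightarrow> 'a::{finite,field}) set"
  assumes kn: "k \<le> n"
  shows "Y \<in> full_set n k \<longleftrightarrow> Y \<in> grass n k \<and> (\<forall>r\<in>{1..k}. lead (RE n k Y) r = n + 1 - r)"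
proof (cases "Y \<in> grass n k")
  case True
  have M: "is_rref n k (RE n k Y)" using RE_grass[OF True] by blast
  have "Y \<in> full_set n k \<longleftrightarrow> ferrers_dots n k Y = k * (n - k)"
    unfolding full_set_def using True by simp
  also have "\<dots> \<longleftrightarrow> (\<forall>r\<in>{1..k}. lead (RE n k Y) r = n + 1 - r)"
    unfolding ferrers_alt by (rule ferrers_iff[OF M kn])
  finally show ?thesis using True by blast
qed (simp add: full_set_def)


lemma digits_bound:
  fixes q :: nat
  shows "(\<forall>j<m. d j < q) \<Longrightarrow> (\<Sum>j<m. d j * q ^ j) < q ^ m"
proof (induction m)
  case 0 thus ?case by simp
next
  case (Suc m)
  have IH: "(\<Sum>j<m. d j * q ^ j) < q ^ m" using Suc by simp
  have "d m < q" using Suc.prems by simp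
  hence "d m + 1 \<le> q" by simp
  hence "(d m + 1) * q ^ m \<le> q * q ^ m" by (rule mult_le_mono1)
  moreover have "(\<Sum>j<Suc m. d j * q ^ j) = (\<Sum>j<m. d j * q ^ j) + d m * q ^ m" by simp
  ultimately show ?case using IH by (simp add: algebra_simps)
qed

lemma digits_inj:
  fixes q :: nat
  shows "(\<forall>j<m. d j < q) \<Longrightarrow> (\<forall>j<m. e j < q) \<Longrightarrow> (\<Sum>j<m. d j * q ^ j) = (\<Sum>j<m. e j * q ^ j)
    \<Longrightarrow> \<forall>j<m. d j = e j"
proof (induction m)
  case 0 thus ?case by simp
next
  case (Suc m)
  have bd: "(\<Sum>j<m. d j * q ^ j) < q ^ m" "(\<Sum>j<m. e j * q ^ j) < q ^ m"
    using digits_bound[of m d q] digits_bound[of m e q] Suc.prems by auto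
  have qm: "0 < q ^ m" by (rule le_less_trans[OF le0 bd(1)])
  define A where "A = (\<Sum>j<m. d j * q ^ j)"
  define B where "B = (\<Sum>j<m. e j * q ^ j)"
  have bA: "A < q ^ m" using bd(1) unfolding A_def .
  have bB: "B < q ^ m" using bd(2) unfolding B_def .
  have eq: "A + d m * q ^ m = B + e m * q ^ m" using Suc.prems(3) unfolding A_def B_def by simp
  have qn: "q ^ m \<noteq> 0" using qm by simp
  have "(A + d m * q ^ m) div q ^ m = d m" using bA qn by simp
  moreover have "(B + e m * q ^ m) div q ^ m = e m" using bB qn by simp
  ultimately have dm: "d m = e m" using eq by simp
  have "(A + d m * q ^ m) mod q ^ m = A" using bA by simp
  moreover have "(B + e m * q ^ m) mod q ^ m = B" using bB by simp
  ultimately have AB: "A = B" using eq by simp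
  have p1: "\<forall>j<m. d j < q" "\<forall>j<m. e j < q" using Suc.prems(1,2) by simp_all
  have "\<forall>j<m. d j = e j" using Suc.IH[OF p1 AB[unfolded A_def B_def]] .
  thus ?case using dm by (auto simp: less_Suc_eq)
qed

lemma rev_sum:
  fixes f :: "nat \<Rightarrow> nat"
  shows "(\<Sum>t=1..k. f t * q ^ (k - t)) = (\<Sum>j<k. f (k - j) * q ^ j)"
proof (rule sum.reindex_bij_witness[of _ "\<lambda>j. k - j" "\<lambda>t. k - t"])
qed auto

definition cval :: "('a::{finite,field} \<Rightarrow> nat) \<Rightarrow> nat \<Rightarrow> (nat \<Rightarrow> 'a) \<Rightarrow> nat" where
  "cval phi k c = (\<Sum>t=1..k. phi (c t) * CARD('a) ^ (k - t))"

lemma colval_cval: "colval phi n k X i = cval phi k (\<lambda>t. RE n k X t i)"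
  unfolding colval_def cval_def by simp

lemma cval_cong: "(\<forall>t\<in>{1..k}. c t = c' t) \<Longrightarrow> cval phi k c = cval phi k c'"
  unfolding cval_def by (rule sum.cong) auto

lemma phi_lt:
  fixes phi :: "'a::{finite,field} \<Rightarrow> nat"
  assumes "bij_betw phi UNIV {..<CARD('a)}"
  shows "phi x < CARD('a)"
  using assms unfolding bij_betw_def by auto

lemma cval_bound:
  fixes phi :: "'a::{finite,field} \<Rightarrow> nat"
  assumes "bij_betw phi UNIV {..<CARD('a)}"
  shows "cval phi k c < CARD('a) ^ k"
proof -
  have "cval phi k c = (\<Sum>j<k. phi (c (k - j)) * CARD('a) ^ j)"
    unfolding cval_def by (rule rev_sum)
  also have "\<dots> < CARD('a) ^ k" by (rule digits_bound) (use phi_lt[OF assms] in auto)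
  finally show ?thesis .
qed

lemma cval_inj:
  fixes phi :: "'a::{finite,field} \<Rightarrow> nat"
  assumes bij: "bij_betw phi UNIV {..<CARD('a)}"
  shows "inj_on (cval phi k) (PiE {1..k} (\<lambda>_. UNIV))"
proof (rule inj_onI)
  fix c c' assume c: "c \<in> PiE {1..k} (\<lambda>_. UNIV)" and c': "c' \<in> PiE {1..k} (\<lambda>_. UNIV)"
    and e: "cval phi k c = cval phi k c'"
  have "(\<Sum>j<k. phi (c (k - j)) * CARD('a) ^ j) = (\<Sum>j<k. phi (c' (k - j)) * CARD('a) ^ j)"
    using e unfolding cval_def rev_sum .
  hence d: "\<forall>j<k. phi (c (k - j)) = phi (c' (k - j))"
    by (rule digits_inj[rotated 2]) (use phi_lt[OF bij] in auto)
  have injphi: "inj phi" using bij unfolding bij_betw_def by simp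
  show "c = c'"
  proof (rule PiE_ext[OF c c'])
    fix t assume t: "t \<in> {1..k}"
    hence kt: "k - t < k" "k - (k - t) = t" by auto
    have "phi (c (k - (k - t))) = phi (c' (k - (k - t)))" using d kt(1) by blast
    hence "phi (c t) = phi (c' t)" using kt(2) by simp
    thus "c t = c' t" using injphi by (simp add: inj_eq)
  qed
qed

lemma card_C: "card (PiE {1..k} (\<lambda>_. UNIV :: 'a::finite set)) = CARD('a) ^ k"
  by (simp add: card_PiE)

lemma cval_img:
  fixes phi :: "'a::{finite,field} \<Rightarrow> nat"
  assumes bij: "bij_betw phi UNIV {..<CARD('a)}"
  shows "cval phi k ` (PiE {1..k} (\<lambda>_. UNIV)) = {..<CARD('a) ^ k}"
proof (rule card_subset_eq)
  show "finite {..<CARD('a) ^ k}" by simp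
  show "cval phi k ` (PiE {1..k} (\<lambda>_. UNIV)) \<subseteq> {..<CARD('a) ^ k}"
    using cval_bound[OF bij] by auto
  show "card (cval phi k ` (PiE {1..k} (\<lambda>_. UNIV))) = card {..<CARD('a) ^ k}"
    using card_image[OF cval_inj[OF bij, of k]] card_C[where 'a='a, of k] by simp
qed

lemma card_cval_gt:
  fixes phi :: "'a::{finite,field} \<Rightarrow> nat"
  assumes bij: "bij_betw phi UNIV {..<CARD('a)}" and v: "v < CARD('a) ^ k"
  shows "card {c \<in> PiE {1..k} (\<lambda>_. UNIV). v < cval phi k c} = CARD('a) ^ k - 1 - v"
proof -
  let ?C = "PiE {1..k} (\<lambda>_. UNIV :: 'a set)"
  have "cval phi k ` {c \<in> ?C. v < cval phi k c} = {x \<in> cval phi k ` ?C. v < x}" by auto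
  also have "\<dots> = {x \<in> {..<CARD('a) ^ k}. v < x}" unfolding cval_img[OF bij, of k] ..
  also have "\<dots> = {v<..<CARD('a) ^ k}" by auto
  finally have im: "cval phi k ` {c \<in> ?C. v < cval phi k c} = {v<..<CARD('a) ^ k}" .
  have "inj_on (cval phi k) {c \<in> ?C. v < cval phi k c}"
    by (rule inj_on_subset[OF cval_inj[OF bij]]) auto
  hence "card (cval phi k ` {c \<in> ?C. v < cval phi k c}) = card {c \<in> ?C. v < cval phi k c}"
    by (rule card_image)
  hence "card {c \<in> ?C. v < cval phi k c} = card {v<..<CARD('a) ^ k}"
    unfolding im by simp
  thus ?thesis by simp
qed


lemma ext_less_iff:
  fixes phi :: "'a::{finite,field} \<Rightarrow> nat" and X Y :: "(nat \<Rightarrow> 'a) set"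
  assumes bij: "bij_betw phi UNIV {..<CARD('a)}"
    and kn: "k < n" and lb: "l \<le> n - k - 1"
    and v_zero: "\<forall>i\<in>{1..l}. vX n k X i = 0"
    and v_one: "vX n k X (l + 1) = 1"
    and vY: "\<forall>i\<in>{1..n-k}. vX n k Y i = 0"
  shows "ext_less phi n k X Y \<longleftrightarrow>
    (\<exists>i\<in>{1..l}. (\<forall>j\<in>{1..<i}. \<forall>t\<in>{1..k}. RE n k Y t j = RE n k X t j) \<and>
        colval phi n k X i < colval phi n k Y i)"
proof
  assume "ext_less phi n k X Y"
  then obtain i where i: "i \<in> {1..n}" "ext_col_differ n k X Y i"
    "\<forall>j\<in>{1..n}. j < i \<longrightarrow> \<not> ext_col_differ n k X Y j"
    "extval phi n k X i < extval phi n k Y i"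
    unfolding ext_less_def by blast
  have l1: "l + 1 \<in> {1..n}" "l + 1 \<in> {1..n-k}" using lb kn by auto
  have vY1: "vX n k Y (l + 1) = 0" using vY l1(2) by blast
  have d1: "ext_col_differ n k X Y (l + 1)" unfolding ext_col_differ_def using v_one vY1 by simp
  have il: "i \<le> l"
  proof (rule ccontr)
    assume "\<not> i \<le> l"
    hence "l + 1 < i \<or> i = l + 1" by auto
    thus False
    proof
      assume "l + 1 < i"
      thus False using i(3) l1(1) d1 by blast
    next
      assume e: "i = l + 1"
      have "extval phi n k X i = CARD('a) ^ k + colval phi n k X i"
        unfolding extval_def e v_one by simp
      moreover have "extval phi n k Y i = colval phi n k Y i"
        unfolding extval_def e vY1 by simp
      moreover have "colval phi n k Y i < CARD('a) ^ k"
        unfolding colval_cval by (rule cval_bound[OF bij])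
      ultimately show False using i(4) by simp
    qed
  qed
  have i1: "i \<in> {1..l}" using il i(1) by auto
  have vXi: "vX n k X i = 0" using v_zero i1 by blast
  have vYi: "vX n k Y i = 0" using vY i1 lb by auto
  have "colval phi n k X i < colval phi n k Y i" using i(4) unfolding extval_def vXi vYi by simp
  moreover have "\<forall>j\<in>{1..<i}. \<forall>t\<in>{1..k}. RE n k Y t j = RE n k X t j"
  proof (intro ballI)
    fix j t assume j: "j \<in> {1..<i}" and t: "t \<in> {1..k}"
    have "j \<in> {1..n}" "j < i" using j i(1) by auto
    hence "\<not> ext_col_differ n k X Y j" using i(3) by blast
    thus "RE n k Y t j = RE n k X t j" using t unfolding ext_col_differ_def by auto
  qed
  ultimately show "\<exists>i\<in>{1..l}. (\<forall>j\<in>{1..<i}. \<forall>t\<in>{1..k}. RE n k Y t j = RE n k X t j) \<and>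
        colval phi n k X i < colval phi n k Y i" using i1 by blast
next
  assume "\<exists>i\<in>{1..l}. (\<forall>j\<in>{1..<i}. \<forall>t\<in>{1..k}. RE n k Y t j = RE n k X t j) \<and>
        colval phi n k X i < colval phi n k Y i"
  then obtain i where i: "i \<in> {1..l}" "\<forall>j\<in>{1..<i}. \<forall>t\<in>{1..k}. RE n k Y t j = RE n k X t j"
    "colval phi n k X i < colval phi n k Y i" by blast
  have iN: "i \<in> {1..n}" using i(1) lb kn by auto
  have vXi: "vX n k X i = 0" using v_zero i(1) by blast
  have vYi: "vX n k Y i = 0" using vY i(1) lb by auto
  have dif: "ext_col_differ n k X Y i"
  proof (rule ccontr)
    assume "\<not> ext_col_differ n k X Y i"
    hence "\<forall>t\<in>{1..k}. RE n k X t i = RE n k Y t i" unfolding ext_col_differ_def by auto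
    hence "colval phi n k X i = colval phi n k Y i" unfolding colval_cval by (rule cval_cong)
    thus False using i(3) by simp
  qed
  have nd: "\<forall>j\<in>{1..n}. j < i \<longrightarrow> \<not> ext_col_differ n k X Y j"
  proof (intro ballI impI)
    fix j assume j: "j \<in> {1..n}" "j < i"
    have "vX n k X j = 0" using v_zero j i(1) by auto
    moreover have "vX n k Y j = 0" using vY j i(1) lb by auto
    moreover have "\<forall>t\<in>{1..k}. RE n k X t j = RE n k Y t j" using i(2) j by auto
    ultimately show "\<not> ext_col_differ n k X Y j" unfolding ext_col_differ_def by auto
  qed
  have "extval phi n k X i < extval phi n k Y i" unfolding extval_def vXi vYi using i(3) by simp
  thus "ext_less phi n k X Y" unfolding ext_less_def using iN dif nd by blast
qed


definition Hm :: "nat \<Rightarrow> nat \<Rightarrow> (nat \<Rightarrow> nat \<Rightarrow> 'a::field) \<Rightarrow> nat \<Rightarrow> nat \<Rightarrow> 'a" where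
  "Hm n k A = (\<lambda>r i. if r \<in> {1..k} \<and> i \<in> {1..n} then
      (if i \<le> n - k then A i r else if i = n + 1 - r then 1 else 0) else 0)"

definition Gm :: "nat \<Rightarrow> nat \<Rightarrow> (nat \<Rightarrow> nat \<Rightarrow> 'a) \<Rightarrow> nat \<Rightarrow> nat \<Rightarrow> 'a" where
  "Gm n k M = (\<lambda>j\<in>{1..n-k}. \<lambda>t\<in>{1..k}. M t j)"

lemma Hm_lead:
  assumes kn: "k < n" and r: "r \<in> {1..k}"
  shows "lead (Hm n k A) r = n + 1 - r"
  unfolding lead_vlead
proof (rule vlead_eqI)
  show "Hm n k A r (n + 1 - r) \<noteq> 0" using kn r unfolding Hm_def by auto
  show "\<forall>i>n + 1 - r. Hm n k A r i = 0"
  proof (intro allI impI)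
    fix i assume "n + 1 - r < i"
    hence "\<not> i \<le> n - k" "i \<noteq> n + 1 - r" using r kn by auto
    thus "Hm n k A r i = 0" unfolding Hm_def by auto
  qed
qed

lemma Hm_rref:
  assumes kn: "k < n"
  shows "is_rref n k (Hm n k A)"
  unfolding is_rref_def
proof (intro conjI allI impI ballI)
  fix r assume "r \<notin> {1..k}" thus "Hm n k A r = (\<lambda>_. 0)" unfolding Hm_def by auto
next
  fix r assume r: "r \<in> {1..k}"
  show "in_vecs n (Hm n k A r)" unfolding in_vecs_def Hm_def by auto
  have h1: "Hm n k A r (lead (Hm n k A) r) = 1" unfolding Hm_lead[OF kn r] using r kn
    unfolding Hm_def by auto
  thus "Hm n k A r (lead (Hm n k A) r) = 1" .
  show "Hm n k A r \<noteq> (\<lambda>_. 0)"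
  proof
    assume "Hm n k A r = (\<lambda>_. 0)"
    with h1 show False by simp
  qed
  fix r' assume r': "r' \<in> {1..k}" "r' \<noteq> r"
  show "Hm n k A r' (lead (Hm n k A) r) = 0" unfolding Hm_lead[OF kn r] using r r' kn
    unfolding Hm_def by auto
next
  fix r r' assume r: "r \<in> {1..k}" "r' \<in> {1..k}" "r < r'"
  have "lead (Hm n k A) r' = n + 1 - r'" "lead (Hm n k A) r = n + 1 - r"
    using Hm_lead[OF kn r(1)] Hm_lead[OF kn r(2)] by auto
  thus "lead (Hm n k A) r' < lead (Hm n k A) r" using r kn by auto
qed

definition Mstd :: "nat \<Rightarrow> nat \<Rightarrow> (nat \<Rightarrow> nat \<Rightarrow> 'a::field) set" where
  "Mstd n k = {M. is_rref n k M \<and> (\<forall>r\<in>{1..k}. lead M r = n + 1 - r)}"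

lemma Hm_Mstd: "k < n \<Longrightarrow> Hm n k A \<in> Mstd n k"
  unfolding Mstd_def using Hm_rref Hm_lead by blast

lemma Gm_Hm:
  assumes kn: "k < n" and A: "A \<in> PiE {1..n-k} (\<lambda>_. PiE {1..k} (\<lambda>_. UNIV))"
  shows "Gm n k (Hm n k A) = A"
proof (rule PiE_ext[OF _ A])
  show "Gm n k (Hm n k A) \<in> PiE {1..n-k} (\<lambda>_. PiE {1..k} (\<lambda>_. UNIV))" unfolding Gm_def by auto
  fix j assume j: "j \<in> {1..n-k}"
  show "Gm n k (Hm n k A) j = A j"
  proof (rule PiE_ext)
    show "Gm n k (Hm n k A) j \<in> PiE {1..k} (\<lambda>_. UNIV)" using j unfolding Gm_def by auto
    show "A j \<in> PiE {1..k} (\<lambda>_. UNIV)" using A j by auto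
    fix t assume t: "t \<in> {1..k}"
    show "Gm n k (Hm n k A) j t = A j t" using j t kn unfolding Gm_def Hm_def by auto
  qed
qed

lemma Mstd_eq:
  assumes kn: "k < n" and M: "M \<in> Mstd n k" and N: "N \<in> Mstd n k" and G: "Gm n k M = Gm n k N"
  shows "M = N"
proof (intro ext)
  fix r i
  have Mr: "is_rref n k M" "\<forall>r\<in>{1..k}. lead M r = n + 1 - r" using M unfolding Mstd_def by auto
  have Nr: "is_rref n k N" "\<forall>r\<in>{1..k}. lead N r = n + 1 - r" using N unfolding Mstd_def by auto
  show "M r i = N r i"
  proof (cases "r \<in> {1..k}")
    case False thus ?thesis using rref_outside[OF Mr(1)] rref_outside[OF Nr(1)] by simp
  next
    case r: True
    show ?thesis
    proof (cases "i \<in> {1..n}")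
      case False
      hence "i = 0 \<or> n < i" by auto
      hence z: "\<And>w. in_vecs n w \<Longrightarrow> w i = 0" unfolding in_vecs_def by blast
      show ?thesis using z[OF rref_row(1)[OF Mr(1) r]] z[OF rref_row(1)[OF Nr(1) r]] by simp
    next
      case i: True
      show ?thesis
      proof (cases "i \<le> n - k")
        case True
        hence "i \<in> {1..n-k}" using i by auto
        thus ?thesis using fun_cong[OF fun_cong[OF G, of i], of r] r unfolding Gm_def by simp
      next
        case False
        define r' where "r' = n + 1 - i"
        have r': "r' \<in> {1..k}" "i = n + 1 - r'" using False i kn unfolding r'_def by auto
        have lM: "lead M r' = i" "lead N r' = i" using Mr(2) Nr(2) r' by auto
        have "M r i = (if r = r' then 1 else 0)" using rref_row(3,4)[OF Mr(1) r'(1)] lM r by auto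
        moreover have "N r i = (if r = r' then 1 else 0)" using rref_row(3,4)[OF Nr(1) r'(1)] lM r by auto
        ultimately show ?thesis by simp
      qed
    qed
  qed
qed


lemma count_T:
  fixes phi :: "'a::{finite,field} \<Rightarrow> nat"
  assumes bij: "bij_betw phi UNIV {..<CARD('a)}" and i: "i \<in> {1..m}"
    and x: "\<forall>j. x j \<in> PiE {1..k} (\<lambda>_. UNIV)" and v: "v < CARD('a) ^ k"
  shows "card {A \<in> PiE {1..m} (\<lambda>_. PiE {1..k} (\<lambda>_. UNIV)).
            (\<forall>j\<in>{1..<i}. \<forall>t\<in>{1..k}. A j t = x j t) \<and> v < cval phi k (A i)}
         = (CARD('a) ^ k - 1 - v) * CARD('a) ^ (k * (m - i))"
proof -
  let ?C = "PiE {1..k} (\<lambda>_. UNIV :: 'a set)"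
  define D where "D = (\<lambda>j. if j < i then {x j} else if j = i then {c \<in> ?C. v < cval phi k c} else ?C)"
  have DC: "D j \<subseteq> ?C" for j unfolding D_def using x by auto
  have eq: "{A \<in> PiE {1..m} (\<lambda>_. ?C). (\<forall>j\<in>{1..<i}. \<forall>t\<in>{1..k}. A j t = x j t) \<and> v < cval phi k (A i)}
         = PiE {1..m} D"
  proof (rule set_eqI)
    fix A
    show "A \<in> {A \<in> PiE {1..m} (\<lambda>_. ?C). (\<forall>j\<in>{1..<i}. \<forall>t\<in>{1..k}. A j t = x j t) \<and> v < cval phi k (A i)}
          \<longleftrightarrow> A \<in> PiE {1..m} D"
    proof
      assume A: "A \<in> {A \<in> PiE {1..m} (\<lambda>_. ?C). (\<forall>j\<in>{1..<i}. \<forall>t\<in>{1..k}. A j t = x j t) \<and> v < cval phi k (A i)}"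
      hence A1: "A \<in> PiE {1..m} (\<lambda>_. ?C)" and A2: "\<forall>j\<in>{1..<i}. \<forall>t\<in>{1..k}. A j t = x j t"
        and A3: "v < cval phi k (A i)" by auto
      show "A \<in> PiE {1..m} D"
      proof (rule PiE_I)
        fix j assume j: "j \<in> {1..m}"
        have Aj: "A j \<in> ?C" using A1 j by auto
        show "A j \<in> D j"
        proof (cases "j < i")
          case True
          have "A j = x j"
          proof (rule PiE_ext[OF Aj])
            show "x j \<in> ?C" using x by blast
            fix t assume "t \<in> {1..k}"
            thus "A j t = x j t" using A2 True j by auto
          qed
          thus ?thesis unfolding D_def using True by simp
        next
          case False
          thus ?thesis unfolding D_def using Aj A3 by auto
        qed
      next
        fix j assume "j \<notin> {1..m}"
        thus "A j = undefined" using A1 by auto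
      qed
    next
      assume A: "A \<in> PiE {1..m} D"
      have A1: "A \<in> PiE {1..m} (\<lambda>_. ?C)" using A DC PiE_mono by blast
      have "A i \<in> D i" using A i by auto
      hence A3: "v < cval phi k (A i)" unfolding D_def by auto
      have A2: "\<forall>j\<in>{1..<i}. \<forall>t\<in>{1..k}. A j t = x j t"
      proof (intro ballI)
        fix j t assume j: "j \<in> {1..<i}" and "t \<in> {1..k}"
        have "j \<in> {1..m}" using j i by auto
        hence "A j \<in> D j" using A by auto
        hence "A j = x j" unfolding D_def using j by auto
        thus "A j t = x j t" by simp
      qed
      show "A \<in> {A \<in> PiE {1..m} (\<lambda>_. ?C). (\<forall>j\<in>{1..<i}. \<forall>t\<in>{1..k}. A j t = x j t) \<and> v < cval phi k (A i)}"
        using A1 A2 A3 by blast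
    qed
  qed
  have cD: "card (D j) = (if j < i then 1 else if j = i then CARD('a) ^ k - 1 - v else CARD('a) ^ k)" for j
    unfolding D_def using card_cval_gt[OF bij v] card_C[where 'a='a, of k] by auto
  have split: "{1..m} = {1..<i} \<union> ({i} \<union> {i+1..m})" using i by auto
  have "card (PiE {1..m} D) = (\<Prod>j\<in>{1..m}. card (D j))" by (rule card_PiE) simp
  also have "\<dots> = (\<Prod>j\<in>{1..<i}. card (D j)) * ((\<Prod>j\<in>{i}. card (D j)) * (\<Prod>j\<in>{i+1..m}. card (D j)))"
  proof -
    have "(\<Prod>j\<in>{1..<i} \<union> ({i} \<union> {i+1..m}). card (D j)) = (\<Prod>j\<in>{1..<i}. card (D j)) * (\<Prod>j\<in>{i} \<union> {i+1..m}. card (D j))"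
      by (rule prod.union_disjoint) auto
    moreover have "(\<Prod>j\<in>{i} \<union> {i+1..m}. card (D j)) = (\<Prod>j\<in>{i}. card (D j)) * (\<Prod>j\<in>{i+1..m}. card (D j))"
      by (rule prod.union_disjoint) auto
    ultimately show ?thesis unfolding split[symmetric] by simp
  qed
  also have "(\<Prod>j\<in>{1..<i}. card (D j)) = 1" by (rule prod.neutral) (auto simp: cD)
  also have "(\<Prod>j\<in>{i}. card (D j)) = CARD('a) ^ k - 1 - v" by (simp add: cD)
  also have "(\<Prod>j\<in>{i+1..m}. card (D j)) = (\<Prod>j\<in>{i+1..m}. CARD('a) ^ k)"
    by (rule prod.cong) (auto simp: cD)
  also have "\<dots> = CARD('a) ^ (k * (m - i))" by (simp add: power_mult)
  finally show ?thesis using eq by simp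
qed

theorem lemma6:
  fixes phi :: "'a::{finite,field} \<Rightarrow> nat"
    and n k l :: nat
    and X :: "(nat \<Rightarrow> 'a) set"
  assumes phi_bij: "bij_betw phi UNIV {..<CARD('a)}"
    and phi0: "phi 0 = 0" and phi1: "phi 1 = 1"
    and k_pos: "0 < k" and k_less: "k < n"
    and X_grass: "X \<in> grass n k"
    and X_notS: "X \<notin> full_set n k"
    and l_bound: "l \<le> n - k - 1"
    and v_zero: "\<forall>i\<in>{1..l}. vX n k X i = 0"
    and v_one: "vX n k X (l + 1) = 1"
  shows "int (card {Y \<in> full_set n k. ext_less phi n k X Y}) =
         (\<Sum>i=1..l. (int (CARD('a) ^ k) - 1 - int (colval phi n k X i))
                       * int (CARD('a) ^ (k * (n - k - i))))"
proof -
  have kn: "k \<le> n" using k_less by simp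
  define m where "m = n - k"
  let ?C = "PiE {1..k} (\<lambda>_. UNIV :: 'a set)"
  define CC where "CC = PiE {1..m} (\<lambda>_. ?C)"
  have fullD: "Y \<in> grass n k \<and> is_rref n k (RE n k Y) \<and> rowspan k (RE n k Y) = Y \<and>
      (\<forall>r\<in>{1..k}. lead (RE n k Y) r = n + 1 - r)" if Y: "Y \<in> full_set n k" for Y :: "(nat \<Rightarrow> 'a) set"
    using full_iff[OF kn, of Y] Y RE_grass[of Y n k] by blast
  have vY: "\<forall>i\<in>{1..n-k}. vX n k Y i = 0" if Y: "Y \<in> full_set n k" for Y :: "(nat \<Rightarrow> 'a) set"
  proof
    fix i assume i: "i \<in> {1..n-k}"
    have "i \<notin> lead (RE n k Y) ` {1..k}"
    proof
      assume "i \<in> lead (RE n k Y) ` {1..k}"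
      then obtain r where r: "r \<in> {1..k}" "i = lead (RE n k Y) r" by blast
      hence "i = n + 1 - r" using fullD[OF Y] by auto
      thus False using i r kn by auto
    qed
    thus "vX n k Y i = 0" unfolding vX_alt by simp
  qed
  define cond where "cond = (\<lambda>M::nat \<Rightarrow> nat \<Rightarrow> 'a. \<exists>i\<in>{1..l}.
      (\<forall>j\<in>{1..<i}. \<forall>t\<in>{1..k}. M t j = RE n k X t j) \<and> colval phi n k X i < cval phi k (\<lambda>t. M t i))"
  have ext: "ext_less phi n k X Y \<longleftrightarrow> cond (RE n k Y)" if Y: "Y \<in> full_set n k" for Y :: "(nat \<Rightarrow> 'a) set"
    unfolding cond_def colval_cval[of phi n k Y] colval_cval[of phi n k X, symmetric]
    by (rule ext_less_iff[OF phi_bij k_less l_bound v_zero v_one vY[OF Y], unfolded colval_cval[of phi n k Y]])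
  define SY where "SY = {Y \<in> full_set n k. ext_less phi n k X Y}"
  have inj1: "inj_on (RE n k) SY"
  proof (rule inj_onI)
    fix Y Y' assume "Y \<in> SY" "Y' \<in> SY" "RE n k Y = RE n k Y'"
    thus "Y = Y'" using fullD unfolding SY_def by (metis (no_types, lifting) mem_Collect_eq)
  qed
  have img1: "RE n k ` SY = {M \<in> Mstd n k. cond M}"
  proof
    show "RE n k ` SY \<subseteq> {M \<in> Mstd n k. cond M}"
    proof
      fix M assume "M \<in> RE n k ` SY"
      then obtain Y where Y: "Y \<in> full_set n k" "ext_less phi n k X Y" "M = RE n k Y"
        unfolding SY_def by blast
      have "M \<in> Mstd n k" using fullD[OF Y(1)] Y(3) unfolding Mstd_def by blast
      moreover have "cond M" using ext[OF Y(1)] Y(2,3) by simp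
      ultimately show "M \<in> {M \<in> Mstd n k. cond M}" by blast
    qed
  next
    show "{M \<in> Mstd n k. cond M} \<subseteq> RE n k ` SY"
    proof
      fix M assume M: "M \<in> {M \<in> Mstd n k. cond M}"
      hence Mr: "is_rref n k M" "\<forall>r\<in>{1..k}. lead M r = n + 1 - r" "cond M"
        unfolding Mstd_def by auto
      define Y where "Y = rowspan k M"
      have RY: "RE n k Y = M" unfolding Y_def by (rule RE_rowspan[OF Mr(1)])
      have "Y \<in> grass n k" unfolding Y_def by (rule rref_grass[OF Mr(1)])
      hence YF: "Y \<in> full_set n k" using full_iff[OF kn, of Y] RY Mr(2) by simp
      have "ext_less phi n k X Y" using ext[OF YF] RY Mr(3) by simp
      hence "Y \<in> SY" unfolding SY_def using YF by blast
      thus "M \<in> RE n k ` SY" using RY by blast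
    qed
  qed
  have c1: "card SY = card {M \<in> Mstd n k. cond M}"
    using card_image[OF inj1] img1 by simp
  define cond' where "cond' = (\<lambda>A::nat \<Rightarrow> nat \<Rightarrow> 'a. \<exists>i\<in>{1..l}.
      (\<forall>j\<in>{1..<i}. \<forall>t\<in>{1..k}. A j t = RE n k X t j) \<and> colval phi n k X i < cval phi k (A i))"
  have lm: "l < m" using l_bound k_less unfolding m_def by auto
  have Gent: "Gm n k M j t = M t j" if "j \<in> {1..m}" "t \<in> {1..k}" for M :: "nat \<Rightarrow> nat \<Rightarrow> 'a" and j t
    using that unfolding Gm_def m_def by simp
  have condG: "cond M \<longleftrightarrow> cond' (Gm n k M)" for M
  proof -
    have "(\<forall>j\<in>{1..<i}. \<forall>t\<in>{1..k}. M t j = RE n k X t j) \<longleftrightarrow>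
          (\<forall>j\<in>{1..<i}. \<forall>t\<in>{1..k}. Gm n k M j t = RE n k X t j)" if i: "i \<in> {1..l}" for i
      using Gent i lm by auto
    moreover have "cval phi k (\<lambda>t. M t i) = cval phi k (Gm n k M i)" if i: "i \<in> {1..l}" for i
      by (rule cval_cong) (use Gent i lm in auto)
    ultimately show ?thesis unfolding cond_def cond'_def by (metis (no_types, lifting))
  qed
  have inj2: "inj_on (Gm n k) {M \<in> Mstd n k. cond M}"
    by (rule inj_onI) (use Mstd_eq[OF k_less] in blast)
  have img2: "Gm n k ` {M \<in> Mstd n k. cond M} = {A \<in> CC. cond' A}"
  proof
    show "Gm n k ` {M \<in> Mstd n k. cond M} \<subseteq> {A \<in> CC. cond' A}"
    proof
      fix A assume "A \<in> Gm n k ` {M \<in> Mstd n k. cond M}"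
      then obtain M where "cond M" "A = Gm n k M" by blast
      moreover have "Gm n k M \<in> CC" unfolding Gm_def CC_def m_def by auto
      ultimately show "A \<in> {A \<in> CC. cond' A}" using condG by blast
    qed
  next
    show "{A \<in> CC. cond' A} \<subseteq> Gm n k ` {M \<in> Mstd n k. cond M}"
    proof
      fix A assume A: "A \<in> {A \<in> CC. cond' A}"
      have AC: "A \<in> PiE {1..n-k} (\<lambda>_. ?C)" using A unfolding CC_def m_def by simp
      have GH: "Gm n k (Hm n k A) = A" by (rule Gm_Hm[OF k_less AC])
      have "cond (Hm n k A)" using condG[of "Hm n k A"] GH A by simp
      hence "Hm n k A \<in> {M \<in> Mstd n k. cond M}" using Hm_Mstd[OF k_less] by blast
      thus "A \<in> Gm n k ` {M \<in> Mstd n k. cond M}" using GH by (metis image_eqI)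
    qed
  qed
  have c2: "card {M \<in> Mstd n k. cond M} = card {A \<in> CC. cond' A}"
    using card_image[OF inj2] img2 by simp
  define T where "T = (\<lambda>i. {A \<in> CC. (\<forall>j\<in>{1..<i}. \<forall>t\<in>{1..k}. A j t = RE n k X t j)
                              \<and> colval phi n k X i < cval phi k (A i)})"
  have U: "{A \<in> CC. cond' A} = (\<Union>i\<in>{1..l}. T i)" unfolding T_def cond'_def by blast
  have finCC: "finite CC" unfolding CC_def by (intro finite_PiE) auto
  have disj: "\<forall>i\<in>{1..l}. \<forall>i'\<in>{1..l}. i \<noteq> i' \<longrightarrow> T i \<inter> T i' = {}"
  proof (intro ballI impI)
    have key: "T i \<inter> T i' = {}" if ii: "i < i'" "i \<in> {1..l}" for i i'
    proof (rule ccontr)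
      assume "T i \<inter> T i' \<noteq> {}"
      then obtain A where A: "A \<in> T i" "A \<in> T i'" by blast
      have "i \<in> {1..<i'}" using ii by auto
      hence "\<forall>t\<in>{1..k}. A i t = RE n k X t i" using A(2) unfolding T_def by auto
      hence "cval phi k (A i) = colval phi n k X i" unfolding colval_cval by (rule cval_cong)
      thus False using A(1) unfolding T_def by simp
    qed
    fix i i' assume "i \<in> {1..l}" "i' \<in> {1..l}" "i \<noteq> i'"
    thus "T i \<inter> T i' = {}" using key[of i i'] key[of i' i] by (cases "i < i'") (auto simp: Int_commute)
  qed
  define x where "x = (\<lambda>j. restrict (\<lambda>t. RE n k X t j) {1..k})"
  have xC: "\<forall>j. x j \<in> ?C" unfolding x_def by simp
  have cT: "card (T i) = (CARD('a) ^ k - 1 - colval phi n k X i) * CARD('a) ^ (k * (m - i))"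
    if i: "i \<in> {1..l}" for i
  proof -
    have Ti: "T i = {A \<in> PiE {1..m} (\<lambda>_. ?C). (\<forall>j\<in>{1..<i}. \<forall>t\<in>{1..k}. A j t = x j t)
                 \<and> colval phi n k X i < cval phi k (A i)}"
      unfolding T_def CC_def x_def by auto
    have im: "i \<in> {1..m}" using i lm by auto
    have vb: "colval phi n k X i < CARD('a) ^ k" unfolding colval_cval by (rule cval_bound[OF phi_bij])
    show ?thesis unfolding Ti by (rule count_T[OF phi_bij im xC vb])
  qed
  have finT: "\<forall>i\<in>{1..l}. finite (T i)" unfolding T_def using finCC by simp
  have "card SY = card (\<Union>i\<in>{1..l}. T i)" using c1 c2 U by simp
  also have "\<dots> = (\<Sum>i\<in>{1..l}. card (T i))" by (rule card_UN_disjoint[OF _ finT disj]) simp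
  also have "\<dots> = (\<Sum>i=1..l. (CARD('a) ^ k - 1 - colval phi n k X i) * CARD('a) ^ (k * (m - i)))"
    by (rule sum.cong) (use cT in auto)
  finally have cS: "card SY = (\<Sum>i=1..l. (CARD('a) ^ k - 1 - colval phi n k X i) * CARD('a) ^ (k * (m - i)))" .
  have "int (card SY) = (\<Sum>i=1..l. int ((CARD('a) ^ k - 1 - colval phi n k X i) * CARD('a) ^ (k * (m - i))))"
    unfolding cS by (rule of_nat_sum)
  also have "\<dots> = (\<Sum>i=1..l. (int (CARD('a) ^ k) - 1 - int (colval phi n k X i))
                       * int (CARD('a) ^ (k * (n - k - i))))"
  proof (rule sum.cong)
    fix i assume "i \<in> {1..l}"
    have vb: "colval phi n k X i < CARD('a) ^ k" unfolding colval_cval by (rule cval_bound[OF phi_bij])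
    hence "int (CARD('a) ^ k - 1 - colval phi n k X i) = int (CARD('a) ^ k) - 1 - int (colval phi n k X i)"
      by (simp add: of_nat_diff)
    thus "int ((CARD('a) ^ k - 1 - colval phi n k X i) * CARD('a) ^ (k * (m - i))) =
          (int (CARD('a) ^ k) - 1 - int (colval phi n k X i)) * int (CARD('a) ^ (k * (n - k - i)))"
      unfolding m_def by (simp only: of_nat_mult)
  qed simp
  finally show ?thesis unfolding SY_def .
qed

end
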